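(* For every integer $t\geq 1$, \[ rx_3(K_{2,t})=\begin{cases} 2, & \text{if } t=1,2;\\ 3, & \text{if } t=3,4;\\ 4, & \text{if } 5\leq t\leq 8;\\ 5, & \text{if } 9\leq t\leq 20;\\ k, & \text{if } (k-1)(k-2)+1\leq t\leq k(k-1) \text{ for an integer } k\geq 6. \end{cases} \]
   Context: All graphs are simple, finite, undirected. An edge coloring of a graph $G$ is any assignment of colors to the edges (adjacent edges may receive the same color). A tree $T$ in an edge-colored graph is a rainbow tree if no two edges of $T$ have the same color. For $S\subseteq V(G)$, an $S$-tree is a subtree of $G$ containing all vertices of $S$. For an integer $k\ge 2$, a $k$-rainbow coloring of $G$ is an edge coloring such that for every set $S$ of $k$ vertices of $G$ there is a rainbow $S$-tree in $G$. The $k$-rainbow index $rx_k(G)$ is the minimum number of colors in a $k$-rainbow coloring of $G$. $K_{2,t}$ denotes the complete bipartite graph with parts of sizes $2$ and $t$. *)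

theory Defs
  imports Main
begin

definition simple_graph :: "'a set \<Rightarrow> 'a set set \<Rightarrow> bool" where
  "simple_graph V E \<longleftrightarrow> finite V \<and> (\<forall>e\<in>E. e \<subseteq> V \<and> card e = 2)"

definition connected_graph :: "'a set \<Rightarrow> 'a set set \<Rightarrow> bool" where
  "connected_graph VT ET \<longleftrightarrow>
     (\<forall>u\<in>VT. \<forall>v\<in>VT. (\<lambda>x y. {x, y} \<in> ET)\<^sup>*\<^sup>* u v)"

definition is_cycle :: "'a set set \<Rightarrow> 'a list \<Rightarrow> bool" where
  "is_cycle ET vs \<longleftrightarrow> length vs \<ge> 3 \<and> distinct vs \<and>
     (\<forall>i < length vs. {vs ! i, vs ! ((i + 1) mod length vs)} \<in> ET)"

definition acyclic_graph :: "'a set set \<Rightarrow> bool" where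
  "acyclic_graph ET \<longleftrightarrow> (\<nexists>vs. is_cycle ET vs)"

definition subtree :: "'a set \<Rightarrow> 'a set set \<Rightarrow> 'a set \<Rightarrow> 'a set set \<Rightarrow> bool" where
  "subtree V E VT ET \<longleftrightarrow> VT \<noteq> {} \<and> VT \<subseteq> V \<and> ET \<subseteq> E \<and> (\<forall>e\<in>ET. e \<subseteq> VT)
     \<and> connected_graph VT ET \<and> acyclic_graph ET"

definition rainbow :: "('a set \<Rightarrow> nat) \<Rightarrow> 'a set set \<Rightarrow> bool" where
  "rainbow c ET \<longleftrightarrow> inj_on c ET"

definition k_rainbow_coloring :: "'a set \<Rightarrow> 'a set set \<Rightarrow> nat \<Rightarrow> ('a set \<Rightarrow> nat) \<Rightarrow> bool" where
  "k_rainbow_coloring V E k c \<longleftrightarrow>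
     (\<forall>S. S \<subseteq> V \<and> card S = k \<longrightarrow>
        (\<exists>VT ET. subtree V E VT ET \<and> S \<subseteq> VT \<and> rainbow c ET))"

definition rainbow_index :: "nat \<Rightarrow> 'a set \<Rightarrow> 'a set set \<Rightarrow> nat" where
  "rainbow_index k V E = (LEAST n. \<exists>c. k_rainbow_coloring V E k c \<and> card (c ` E) = n)"

text \<open>K_{2,t}: vertices 0,1 form one part, 2,...,t+1 the other.\<close>
definition K2t_vertices :: "nat \<Rightarrow> nat set" where
  "K2t_vertices t = {0..<t+2}"

definition K2t_edges :: "nat \<Rightarrow> nat set set" where
  "K2t_edges t = {{a, b} | a b. a < 2 \<and> 2 \<le> b \<and> b < t + 2}"

end

theory Submission
  imports Defs
begin


definition tr :: "'a set \<Rightarrow> 'a set set \<Rightarrow> bool" where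
  "tr VT ET \<longleftrightarrow> VT \<noteq> {} \<and> (\<forall>e\<in>ET. e \<subseteq> VT) \<and> connected_graph VT ET \<and> acyclic_graph ET"

lemma tr_single: "tr {r} {}"
  unfolding tr_def connected_graph_def acyclic_graph_def is_cycle_def
  apply auto apply (rule exI[of _ 0]) by linarith

lemma cycle_mod_neighbors:
  assumes "is_cycle ET vs" "i < length vs"
  shows "{vs ! i, vs ! ((i + 1) mod length vs)} \<in> ET"
    "{vs ! ((i + length vs - 1) mod length vs), vs ! i} \<in> ET"
proof -
  let ?n = "length vs"
  show "{vs ! i, vs ! ((i + 1) mod length vs)} \<in> ET" using assms unfolding is_cycle_def by auto
  have n3: "?n \<ge> 3" using assms unfolding is_cycle_def by auto
  let ?j = "(i + ?n - 1) mod ?n"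
  have n0: "0 < ?n" using n3 by linarith
  have j: "?j < ?n" using n0 by (rule mod_less_divisor)
  have "(?j + 1) mod ?n = i"
  proof -
    have e1: "(?j + 1) mod ?n = (i + ?n - 1 + 1) mod ?n" by (metis mod_add_left_eq)
    have e2: "i + ?n - 1 + 1 = i + ?n" using n3 by linarith
    have e3: "(i + ?n) mod ?n = i" using assms(2) by simp
    show ?thesis using e1 e2 e3 by simp
  qed
  then show "{vs ! ?j, vs ! i} \<in> ET" using assms j unfolding is_cycle_def by metis
qed

lemma tr_add_leaf:
  assumes "tr VT ET" "x \<in> VT" "y \<notin> VT"
  shows "tr (insert y VT) (insert {x,y} ET)"
proof -
  let ?R = "\<lambda>p q. {p, q} \<in> ET"
  let ?R' = "\<lambda>p q. {p, q} \<in> insert {x,y} ET"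
  have mono: "?R\<^sup>*\<^sup>* p q \<Longrightarrow> ?R'\<^sup>*\<^sup>* p q" for p q
    by (erule rtranclp_mono[THEN predicate2D, rotated]) auto
  have conn: "\<forall>p\<in>VT. \<forall>q\<in>VT. ?R\<^sup>*\<^sup>* p q" using assms(1) unfolding tr_def connected_graph_def by auto
  have xy: "?R' x y" "?R' y x" by (auto simp: insert_commute)
  have c2: "?R'\<^sup>*\<^sup>* p q" if "p \<in> insert y VT" "q \<in> insert y VT" for p q
  proof -
    have py: "?R'\<^sup>*\<^sup>* p x" if "p \<in> insert y VT" for p
      using that conn assms(2) mono xy by (metis insert_iff r_into_rtranclp)
    have yq: "?R'\<^sup>*\<^sup>* x q" if "q \<in> insert y VT" for q
      using that conn assms(2) mono xy by (metis insert_iff r_into_rtranclp)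
    show ?thesis using py[OF that(1)] yq[OF that(2)] by (rule rtranclp_trans)
  qed
  have sub: "\<forall>e\<in>ET. e \<subseteq> VT" using assms(1) unfolding tr_def by auto
  have yE: "y \<notin> e" if "e \<in> ET" for e using sub that assms(3) by auto
  have acyc: "acyclic_graph (insert {x,y} ET)"
    unfolding acyclic_graph_def
  proof
    assume "\<exists>vs. is_cycle (insert {x, y} ET) vs"
    then obtain vs where cyc: "is_cycle (insert {x, y} ET) vs" by blast
    let ?n = "length vs"
    have n3: "?n \<ge> 3" and dist: "distinct vs" using cyc unfolding is_cycle_def by auto
    show False
    proof (cases "y \<in> set vs")
      case True
      then obtain i where i: "i < ?n" "vs ! i = y" by (metis in_set_conv_nth)
      have xy': "x \<noteq> y" using assms by auto
      let ?j = "(i + ?n - 1) mod ?n" and ?k = "(i + 1) mod ?n"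
      have e1: "{y, vs ! ?k} \<in> insert {x,y} ET" using cycle_mod_neighbors(1)[OF cyc i(1)] i by simp
      have e2: "{vs ! ?j, y} \<in> insert {x,y} ET" using cycle_mod_neighbors(2)[OF cyc i(1)] i by simp
      have k: "vs ! ?k = x" using e1 yE xy' by (auto simp: doubleton_eq_iff)
      have j: "vs ! ?j = x" using e2 yE xy' by (auto simp: doubleton_eq_iff)
      have n0: "0 < ?n" using n3 by linarith
      have kn: "?k < ?n" "?j < ?n" using n0 by (rule mod_less_divisor)+
      have "?k = ?j" using nth_eq_iff_index_eq[OF dist kn] k j by simp
      moreover have "?k \<noteq> ?j"
      proof
        assume eq: "?k = ?j"
        show False using eq n3 i(1)
        proof -
          have m: "(i + 1) mod ?n = (i + ?n - 1) mod ?n" using eq .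
          have "int ((i + 1) mod ?n) = (int i + 1) mod int ?n" by (simp add: zmod_int add.commute)
          moreover have "int ((i + ?n - 1) mod ?n) = (int i + int ?n - 1) mod int ?n"
            using n3 by (simp add: zmod_int of_nat_diff)
          ultimately have "(int i + 1) mod int ?n = (int i + int ?n - 1) mod int ?n" using m by simp
          also have "\<dots> = (int i - 1) mod int ?n"
          proof -
            have "int i + int ?n - 1 = (int i - 1) + int ?n" by simp
            then show ?thesis by (simp only: mod_add_self2)
          qed
          finally have "((int i + 1) - (int i - 1)) mod int ?n = 0" by (simp add: mod_eq_dvd_iff)
          then have "int ?n dvd 2" by (simp add: dvd_eq_mod_eq_0)
          then show False using n3 by (auto dest!: zdvd_imp_le)
        qed
      qed
      ultimately show False by simp
    next
      case False
      have "is_cycle ET vs"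
        unfolding is_cycle_def
      proof (intro conjI allI impI)
        show "3 \<le> length vs" "distinct vs" using n3 dist by auto
        fix i assume i: "i < length vs"
        have "{vs ! i, vs ! ((i + 1) mod length vs)} \<in> insert {x,y} ET"
          using cyc i unfolding is_cycle_def by auto
        moreover have "y \<notin> {vs ! i, vs ! ((i + 1) mod length vs)}"
        proof -
          have "0 < length vs" using n3 by linarith
          then have "(i + 1) mod length vs < length vs" by (rule mod_less_divisor)
          then show ?thesis using False i nth_mem by auto
        qed
        ultimately show "{vs ! i, vs ! ((i + 1) mod length vs)} \<in> ET" by auto
      qed
      then show False using assms(1) unfolding tr_def acyclic_graph_def by auto
    qed
  qed
  show ?thesis unfolding tr_def connected_graph_def
    using c2 acyc sub assms(2) by auto
qed


lemma tr_leaves: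
  assumes "tr VT ET" "x \<in> VT" "finite L" "L \<inter> VT = {}"
  shows "tr (VT \<union> L) (ET \<union> (\<lambda>w. {x,w}) ` L)"
  using assms(3,4)
proof (induction L rule: finite_induct)
  case empty then show ?case using assms(1) by simp
next
  case (insert w L)
  have "tr (VT \<union> L) (ET \<union> (\<lambda>w. {x,w}) ` L)" using insert by auto
  moreover have "x \<in> VT \<union> L" using assms(2) by auto
  moreover have "w \<notin> VT \<union> L" using insert by auto
  ultimately have "tr (insert w (VT \<union> L)) (insert {x,w} (ET \<union> (\<lambda>w. {x,w}) ` L))"
    by (rule tr_add_leaf)
  then show ?case by simp
qed

lemma tr_subtree: "tr VT ET \<Longrightarrow> VT \<subseteq> V \<Longrightarrow> ET \<subseteq> E \<Longrightarrow> subtree V E VT ET"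
  unfolding tr_def subtree_def by auto

definition W :: "nat \<Rightarrow> nat set" where "W t = {2..<t+2}"

lemma edgeI: "a < 2 \<Longrightarrow> 2 \<le> b \<Longrightarrow> b < t+2 \<Longrightarrow> {a,b} \<in> K2t_edges t"
  unfolding K2t_edges_def by blast
lemma edge0: "w \<in> W t \<Longrightarrow> {0,w} \<in> K2t_edges t"
  unfolding W_def by (rule edgeI) auto
lemma edge1: "w \<in> W t \<Longrightarrow> {1,w} \<in> K2t_edges t"
  unfolding W_def by (rule edgeI) auto

lemma W_V: "W t \<subseteq> K2t_vertices t" "0 \<in> K2t_vertices t" "1 \<in> K2t_vertices t"
  unfolding W_def K2t_vertices_def by auto

lemma ex_star:
  assumes "finite L" "L \<subseteq> W t" "z \<in> {0,1}" "inj_on (\<lambda>w. c {z,w}) L"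
  shows "\<exists>VT ET. subtree (K2t_vertices t) (K2t_edges t) VT ET \<and> insert z L \<subseteq> VT \<and> rainbow c ET"
proof -
  have zL: "z \<notin> L" using assms(2,3) unfolding W_def by auto
  have "tr ({z} \<union> L) ({} \<union> (\<lambda>w. {z,w}) ` L)"
    using tr_leaves[OF tr_single[of z] _ assms(1)] zL by auto
  moreover have "{z} \<union> L \<subseteq> K2t_vertices t" using assms(2,3) W_V by auto
  moreover have "{} \<union> (\<lambda>w. {z,w}) ` L \<subseteq> K2t_edges t" using assms(2,3) edge0 edge1 by auto
  moreover have "rainbow c ({} \<union> (\<lambda>w. {z,w}) ` L)"
    unfolding rainbow_def using assms(4) by (simp add: inj_on_imageI comp_def)
  ultimately show ?thesis by (metis insert_is_Un order_refl tr_subtree)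
qed

lemma ex_double:
  assumes "finite L0" "finite L1" "L0 \<subseteq> W t" "L1 \<subseteq> W t" "m \<in> W t"
    "m \<notin> L0" "m \<notin> L1" "L0 \<inter> L1 = {}"
    "inj_on (\<lambda>w. c {0,w}) L0" "inj_on (\<lambda>w. c {1,w}) L1"
    "(\<lambda>w. c {0,w}) ` L0 \<inter> (\<lambda>w. c {1,w}) ` L1 = {}"
    "c {0,m} \<noteq> c {1,m}"
    "c {0,m} \<notin> (\<lambda>w. c {0,w}) ` L0 \<union> (\<lambda>w. c {1,w}) ` L1"
    "c {1,m} \<notin> (\<lambda>w. c {0,w}) ` L0 \<union> (\<lambda>w. c {1,w}) ` L1"
  shows "\<exists>VT ET. subtree (K2t_vertices t) (K2t_edges t) VT ET \<and> {0,1,m} \<union> L0 \<union> L1 \<subseteq> VT \<and> rainbow c ET"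
proof -
  have W2: "\<And>w. w \<in> W t \<Longrightarrow> w \<ge> 2" unfolding W_def by auto
  have t1: "tr (insert m {0}) (insert {0,m} {})" by (rule tr_add_leaf[OF tr_single]) (use assms(5) W2 in force)+
  have t2: "tr (insert 1 (insert m {0})) (insert {m,1} (insert {0,m} {}))"
    by (rule tr_add_leaf[OF t1]) (use assms(5) W2 in force)+
  have t3: "tr (insert 1 (insert m {0}) \<union> L0) (insert {m,1} (insert {0,m} {}) \<union> (\<lambda>w. {0,w}) ` L0)"
    by (rule tr_leaves[OF t2]) (use assms W2 in force)+
  have t4: "tr ((insert 1 (insert m {0}) \<union> L0) \<union> L1) ((insert {m,1} (insert {0,m} {}) \<union> (\<lambda>w. {0,w}) ` L0) \<union> (\<lambda>w. {1,w}) ` L1)"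
    by (rule tr_leaves[OF t3]) (use assms W2 in force)+
  let ?VT = "(insert 1 (insert m {0}) \<union> L0) \<union> L1"
  let ?ET = "(insert {m,1} (insert {0,m} {}) \<union> (\<lambda>w. {0,w}) ` L0) \<union> (\<lambda>w. {1,w}) ` L1"
  have "subtree (K2t_vertices t) (K2t_edges t) ?VT ?ET"
  proof (rule tr_subtree[OF t4])
    show "?VT \<subseteq> K2t_vertices t" using assms(3-5) W_V by blast
    have "{m,1} \<in> K2t_edges t" using edge1[OF assms(5)] by (simp add: insert_commute)
    then show "?ET \<subseteq> K2t_edges t" using assms(3-5) edge0 edge1 by blast
  qed
  moreover have "rainbow c ?ET"
  proof -
    let ?E0 = "(\<lambda>w. {0,w}) ` L0" and ?E1 = "(\<lambda>w. {1,w}) ` L1"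
    have i0: "inj_on c ?E0" using assms(9) by (simp add: inj_on_imageI comp_def)
    have i1: "inj_on c ?E1" using assms(10) by (simp add: inj_on_imageI comp_def)
    have c0: "c ` ?E0 = (\<lambda>w. c {0,w}) ` L0" by (simp add: image_image)
    have c1: "c ` ?E1 = (\<lambda>w. c {1,w}) ` L1" by (simp add: image_image)
    have i01: "inj_on c (?E0 \<union> ?E1)" unfolding inj_on_Un using i0 i1 c0 c1 assms(11) by blast
    have i2: "inj_on c (insert {0,m} (?E0 \<union> ?E1))"
      using i01 assms(13) c0 c1 by (auto simp: inj_on_insert)
    have i3: "inj_on c (insert {1,m} (insert {0,m} (?E0 \<union> ?E1)))"
      using i2 assms(12,14) c0 c1 by (auto simp: inj_on_insert)
    have "?ET = insert {1,m} (insert {0,m} (?E0 \<union> ?E1))" by (auto simp: insert_commute)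
    then show ?thesis unfolding rainbow_def using i3 by simp
  qed
  ultimately show ?thesis by blast
qed


lemma edge_eq: "(a::nat) < 2 \<Longrightarrow> a' < 2 \<Longrightarrow> 2 \<le> b \<Longrightarrow> 2 \<le> b' \<Longrightarrow> ({a,b} = {a',b'}) = (a = a' \<and> b = b')"
  by (auto simp: doubleton_eq_iff)

lemma edgeE:
  assumes "{x,y} \<in> K2t_edges t"
  shows "(x < 2 \<and> y \<in> W t) \<or> (y < 2 \<and> x \<in> W t)"
  using assms unfolding K2t_edges_def W_def by (auto simp: doubleton_eq_iff)

lemma edges_finite: "finite (K2t_edges t)"
proof -
  have "K2t_edges t \<subseteq> (\<lambda>(a,b). {a,b}) ` ({0..<2} \<times> {2..<t+2})"
    unfolding K2t_edges_def by auto
  then show ?thesis by (rule finite_subset) auto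
qed

lemma incident:
  assumes "subtree V E VT ET" "x \<in> VT" "y \<in> VT" "x \<noteq> y"
  shows "\<exists>z. {x,z} \<in> ET"
proof -
  have "(\<lambda>p q. {p, q} \<in> ET)\<^sup>*\<^sup>* x y" using assms unfolding subtree_def connected_graph_def by auto
  then show ?thesis using assms(4) by (cases rule: converse_rtranclpE) auto
qed

lemma incident_w:
  assumes "subtree (K2t_vertices t) (K2t_edges t) VT ET" "w \<in> W t" "w \<in> VT" "y \<in> VT" "w \<noteq> y"
  shows "\<exists>z. z < 2 \<and> z \<in> VT \<and> {z,w} \<in> ET"
proof -
  obtain z where z: "{w,z} \<in> ET" using incident[OF assms(1,3,4,5)] by blast
  have sub: "ET \<subseteq> K2t_edges t" "\<forall>e\<in>ET. e \<subseteq> VT" using assms(1) unfolding subtree_def by auto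
  have "{w,z} \<in> K2t_edges t" using z sub by auto
  then have "z < 2" using edgeE[of w z t] assms(2) unfolding W_def by auto
  moreover have "z \<in> VT" using z sub by auto
  ultimately show ?thesis using z by (auto simp: insert_commute)
qed

lemma connector:
  assumes "subtree (K2t_vertices t) (K2t_edges t) VT ET" "0 \<in> VT" "1 \<in> VT"
  shows "\<exists>m\<in>W t. {0,m} \<in> ET \<and> {1,m} \<in> ET"
proof -
  have R: "(\<lambda>p q. {p, q} \<in> ET)\<^sup>*\<^sup>* 0 1" using assms unfolding subtree_def connected_graph_def by auto
  have sub: "ET \<subseteq> K2t_edges t" using assms(1) unfolding subtree_def by auto
  have "(\<lambda>p q. {p, q} \<in> ET)\<^sup>*\<^sup>* 0 y \<Longrightarrow>
     y = 0 \<or> (y \<in> W t \<and> {0,y} \<in> ET) \<or> (\<exists>m\<in>W t. {0,m} \<in> ET \<and> {1,m} \<in> ET)" for y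
  proof (induction rule: rtranclp_induct)
    case base then show ?case by simp
  next
    case (step y z)
    have e: "{y,z} \<in> K2t_edges t" using step(2) sub by auto
    from step(3) show ?case
    proof (elim disjE)
      assume "y = 0" then show ?thesis using e step(2) edgeE[OF e] unfolding W_def by auto
    next
      assume y: "y \<in> W t \<and> {0, y} \<in> ET"
      then have "z < 2" using edgeE[OF e] unfolding W_def by auto
      then have "z = 0 \<or> z = 1" by auto
      then show ?thesis using y step(2) by (auto simp: insert_commute)
    qed simp
  qed
  from this[OF R] show ?thesis unfolding W_def by auto
qed

lemma card_ge_list: "distinct xs \<Longrightarrow> set xs \<subseteq> K \<Longrightarrow> finite K \<Longrightarrow> length xs \<le> card K"
  by (metis card_mono distinct_card)

lemma rainbow_distinct: "rainbow c ET \<Longrightarrow> distinct es \<Longrightarrow> set es \<subseteq> ET \<Longrightarrow> distinct (map c es)"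
  unfolding rainbow_def by (simp add: distinct_map inj_on_subset)


definition d4 :: "nat \<Rightarrow> nat \<Rightarrow> nat \<Rightarrow> nat \<Rightarrow> bool" where
 "d4 x y z w \<longleftrightarrow> x \<noteq> y \<and> x \<noteq> z \<and> x \<noteq> w \<and> y \<noteq> z \<and> y \<noteq> w \<and> z \<noteq> w"
definition conn :: "nat \<Rightarrow> nat \<Rightarrow> nat \<Rightarrow> nat \<Rightarrow> nat \<Rightarrow> nat \<Rightarrow> bool" where
 "conn am bm a1 b1 a2 b2 \<longleftrightarrow> d4 am bm a1 a2 \<or> d4 am bm a1 b2 \<or> d4 am bm b1 a2 \<or> d4 am bm b1 b2"
definition tc :: "nat \<Rightarrow> nat \<Rightarrow> nat \<Rightarrow> nat \<Rightarrow> nat \<Rightarrow> nat \<Rightarrow> bool" where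
 "tc a1 b1 a2 b2 a3 b3 \<longleftrightarrow> (a1 \<noteq> a2 \<and> a1 \<noteq> a3 \<and> a2 \<noteq> a3) \<or> (b1 \<noteq> b2 \<and> b1 \<noteq> b3 \<and> b2 \<noteq> b3)
   \<or> conn a1 b1 a2 b2 a3 b3 \<or> conn a2 b2 a1 b1 a3 b3 \<or> conn a3 b3 a1 b1 a2 b2"

lemma col01: "(z::nat) < 2 \<Longrightarrow> c {z,w} \<in> {c {0,w}, c {1,w}}"
  by (cases z) auto

lemma W2: "w \<in> W t \<Longrightarrow> 2 \<le> w" unfolding W_def by auto

lemma tree3:
  assumes krc: "k_rainbow_coloring (K2t_vertices t) (K2t_edges t) 3 c"
    and "x \<in> K2t_vertices t" "y \<in> K2t_vertices t" "z \<in> K2t_vertices t" "distinct [x,y,z]"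
  obtains VT ET where "subtree (K2t_vertices t) (K2t_edges t) VT ET" "x \<in> VT" "y \<in> VT" "z \<in> VT" "rainbow c ET"
proof -
  have "{x,y,z} \<subseteq> K2t_vertices t \<and> card {x,y,z} = 3" using assms(2-5) by auto
  from krc[unfolded k_rainbow_coloring_def, rule_format, OF this]
  obtain VT ET where "subtree (K2t_vertices t) (K2t_edges t) VT ET" "{x,y,z} \<subseteq> VT" "rainbow c ET" by blast
  then show ?thesis using that by auto
qed

lemma N0:
  assumes krc: "k_rainbow_coloring (K2t_vertices t) (K2t_edges t) 3 c" and t: "t \<ge> 1"
  shows "card (c ` K2t_edges t) \<ge> 2"
proof -
  have V: "0 \<in> K2t_vertices t" "1 \<in> K2t_vertices t" "2 \<in> K2t_vertices t" using t unfolding K2t_vertices_def by auto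
  obtain VT ET where T: "subtree (K2t_vertices t) (K2t_edges t) VT ET" "0 \<in> VT" "1 \<in> VT" "2 \<in> VT" "rainbow c ET"
    using tree3[OF krc V] by auto
  obtain m where m: "m \<in> W t" "{0,m} \<in> ET" "{1,m} \<in> ET" using connector[OF T(1-3)] by blast
  have ETE: "ET \<subseteq> K2t_edges t" using T(1) unfolding subtree_def by auto
  have "distinct (map c [{0,m},{1,m}])"
    by (rule rainbow_distinct[OF T(5)]) (use m W2[OF m(1)] in \<open>auto simp: edge_eq\<close>)
  then have "length [c {0,m}, c {1,m}] \<le> card (c ` K2t_edges t)"
    by (intro card_ge_list) (use m ETE edges_finite in auto)
  then show ?thesis by simp
qed

lemma N1:
  assumes krc: "k_rainbow_coloring (K2t_vertices t) (K2t_edges t) 3 c"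
    and w: "w1 \<in> W t" "w2 \<in> W t" "w3 \<in> W t" "distinct [w1,w2,w3]"
  shows "\<exists>x1 x2 x3. x1 \<in> {c {0,w1}, c {1,w1}} \<and> x2 \<in> {c {0,w2}, c {1,w2}} \<and> x3 \<in> {c {0,w3}, c {1,w3}}
     \<and> distinct [x1,x2,x3]"
proof -
  obtain VT ET where T: "subtree (K2t_vertices t) (K2t_edges t) VT ET" "w1 \<in> VT" "w2 \<in> VT" "w3 \<in> VT" "rainbow c ET"
    using tree3[OF krc] w W_V by blast
  obtain z1 where z1: "z1 < 2" "{z1,w1} \<in> ET" using incident_w[OF T(1) w(1) T(2) T(3)] w(4) by auto
  obtain z2 where z2: "z2 < 2" "{z2,w2} \<in> ET" using incident_w[OF T(1) w(2) T(3) T(2)] w(4) by auto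
  obtain z3 where z3: "z3 < 2" "{z3,w3} \<in> ET" using incident_w[OF T(1) w(3) T(4) T(2)] w(4) by auto
  have "distinct (map c [{z1,w1},{z2,w2},{z3,w3}])"
    by (rule rainbow_distinct[OF T(5)]) (use z1 z2 z3 w W2 in \<open>auto simp: edge_eq\<close>)
  then show ?thesis
    apply (rule_tac exI[of _ "c {z1,w1}"], rule_tac exI[of _ "c {z2,w2}"], rule_tac exI[of _ "c {z3,w3}"])
    using col01[OF z1(1), of c w1] col01[OF z2(1), of c w2] col01[OF z3(1), of c w3] by simp
qed

lemma conn_intro:
  assumes "x2 \<in> {a2,b2}" "x3 \<in> {a3,b3}" "d4 am bm x2 x3"
  shows "conn am bm a2 b2 a3 b3"
  using assms unfolding conn_def by auto

lemma N2:
  assumes krc: "k_rainbow_coloring (K2t_vertices t) (K2t_edges t) 3 c"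
    and w: "w1 \<in> W t" "w2 \<in> W t" "w3 \<in> W t" "distinct [w1,w2,w3]"
    and K: "card (c ` K2t_edges t) \<le> 4"
  shows "tc (c {0,w1}) (c {1,w1}) (c {0,w2}) (c {1,w2}) (c {0,w3}) (c {1,w3})"
proof -
  obtain VT ET where T: "subtree (K2t_vertices t) (K2t_edges t) VT ET" "w1 \<in> VT" "w2 \<in> VT" "w3 \<in> VT" "rainbow c ET"
    using tree3[OF krc] w W_V by blast
  obtain z1 where z1: "z1 < 2" "z1 \<in> VT" "{z1,w1} \<in> ET" using incident_w[OF T(1) w(1) T(2) T(3)] w(4) by auto
  obtain z2 where z2: "z2 < 2" "z2 \<in> VT" "{z2,w2} \<in> ET" using incident_w[OF T(1) w(2) T(3) T(2)] w(4) by auto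
  obtain z3 where z3: "z3 < 2" "z3 \<in> VT" "{z3,w3} \<in> ET" using incident_w[OF T(1) w(3) T(4) T(2)] w(4) by auto
  have ww: "2 \<le> w1" "2 \<le> w2" "2 \<le> w3" using w W2 by auto
  have ETE: "ET \<subseteq> K2t_edges t" using T(1) unfolding subtree_def by auto
  have d3: "distinct (map c [{z1,w1},{z2,w2},{z3,w3}])"
    by (rule rainbow_distinct[OF T(5)]) (use z1 z2 z3 w ww in \<open>auto simp: edge_eq\<close>)
  show ?thesis
  proof (cases "0 \<in> VT \<and> 1 \<in> VT")
    case False
    then consider "0 \<notin> VT" | "1 \<notin> VT" by blast
    then show ?thesis
    proof cases
      case 1
      then have "z1 = 1" "z2 = 1" "z3 = 1" using z1 z2 z3 less_2_cases[of z1] less_2_cases[of z2] less_2_cases[of z3] by auto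
      then have "c {1,w1} \<noteq> c {1,w2} \<and> c {1,w1} \<noteq> c {1,w3} \<and> c {1,w2} \<noteq> c {1,w3}" using d3 by simp
      then show ?thesis unfolding tc_def by blast
    next
      case 2
      then have "z1 = 0" "z2 = 0" "z3 = 0" using z1 z2 z3 less_2_cases[of z1] less_2_cases[of z2] less_2_cases[of z3] by auto
      then have "c {0,w1} \<noteq> c {0,w2} \<and> c {0,w1} \<noteq> c {0,w3} \<and> c {0,w2} \<noteq> c {0,w3}" using d3 by simp
      then show ?thesis unfolding tc_def by blast
    qed
  next
    case True
    then obtain m where m: "m \<in> W t" "{0,m} \<in> ET" "{1,m} \<in> ET" using connector[OF T(1)] by blast
    have mm: "2 \<le> m" using W2[OF m(1)] .
    have c1: "c {z1,w1} \<in> {c {0,w1}, c {1,w1}}" "c {z2,w2} \<in> {c {0,w2}, c {1,w2}}" "c {z3,w3} \<in> {c {0,w3}, c {1,w3}}"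
      using col01 z1 z2 z3 by auto
    consider "m = w1" | "m = w2" | "m = w3" | "m \<notin> {w1,w2,w3}" by auto
    then show ?thesis
    proof cases
      case 1
      have "distinct (map c [{0,m},{1,m},{z2,w2},{z3,w3}])"
        by (rule rainbow_distinct[OF T(5)]) (use z1 z2 z3 w ww m mm 1 in \<open>auto simp: edge_eq\<close>)
      then have "d4 (c {0,w1}) (c {1,w1}) (c {z2,w2}) (c {z3,w3})" unfolding d4_def using 1 by auto
      then have "conn (c {0,w1}) (c {1,w1}) (c {0,w2}) (c {1,w2}) (c {0,w3}) (c {1,w3})" by (rule conn_intro[OF c1(2) c1(3)])
      then show ?thesis unfolding tc_def by blast
    next
      case 2
      have "distinct (map c [{0,m},{1,m},{z1,w1},{z3,w3}])"
        by (rule rainbow_distinct[OF T(5)]) (use z1 z2 z3 w ww m mm 2 in \<open>auto simp: edge_eq\<close>)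
      then have "d4 (c {0,w2}) (c {1,w2}) (c {z1,w1}) (c {z3,w3})" unfolding d4_def using 2 by auto
      then have "conn (c {0,w2}) (c {1,w2}) (c {0,w1}) (c {1,w1}) (c {0,w3}) (c {1,w3})" by (rule conn_intro[OF c1(1) c1(3)])
      then show ?thesis unfolding tc_def by blast
    next
      case 3
      have "distinct (map c [{0,m},{1,m},{z1,w1},{z2,w2}])"
        by (rule rainbow_distinct[OF T(5)]) (use z1 z2 z3 w ww m mm 3 in \<open>auto simp: edge_eq\<close>)
      then have "d4 (c {0,w3}) (c {1,w3}) (c {z1,w1}) (c {z2,w2})" unfolding d4_def using 3 by auto
      then have "conn (c {0,w3}) (c {1,w3}) (c {0,w1}) (c {1,w1}) (c {0,w2}) (c {1,w2})" by (rule conn_intro[OF c1(1) c1(2)])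
      then show ?thesis unfolding tc_def by blast
    next
      case 4
      have "distinct (map c [{0,m},{1,m},{z1,w1},{z2,w2},{z3,w3}])"
        by (rule rainbow_distinct[OF T(5)]) (use z1 z2 z3 w ww m mm 4 in \<open>auto simp: edge_eq\<close>)
      then have "length (map c [{0,m},{1,m},{z1,w1},{z2,w2},{z3,w3}]) \<le> card (c ` K2t_edges t)"
        by (rule card_ge_list) (use m z1 z2 z3 ETE edges_finite in auto)
      then show ?thesis using K by simp
    qed
  qed
qed


lemma card_W: "card (W t) = t" unfolding W_def by simp
lemma finite_W: "finite (W t)" unfolding W_def by simp

lemma fiber_bound:
  assumes "finite X" "finite I" "g ` X \<subseteq> I" "\<And>i. i \<in> I \<Longrightarrow> card {x\<in>X. g x = i} \<le> b"
  shows "card X \<le> card I * b"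
proof -
  have X: "X = (\<Union>i\<in>I. {x\<in>X. g x = i})" using assms(3) by auto
  have "card X = (\<Sum>i\<in>I. card {x\<in>X. g x = i})"
    by (subst X, rule card_UN_disjoint) (use assms in auto)
  also have "\<dots> \<le> of_nat (card I) * b" by (rule sum_bounded_above) (use assms(4) in auto)
  finally show ?thesis by simp
qed

lemma three_elems:
  assumes "card F \<ge> 3"
  obtains a b d where "a \<in> F" "b \<in> F" "d \<in> F" "distinct [a,b,d]"
proof -
  have "finite F" using assms by (metis card.infinite not_numeral_le_zero)
  then obtain S where "S \<subseteq> F" "card S = 3" using obtain_subset_with_card_n assms by metis
  then show ?thesis using that unfolding card_3_iff by auto
qed

lemma two_elems:
  assumes "card F \<ge> 2"
  obtains a b where "a \<in> F" "b \<in> F" "a \<noteq> b"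
proof -
  have "finite F" using assms by (metis card.infinite not_numeral_le_zero)
  then obtain S where "S \<subseteq> F" "card S = 2" using obtain_subset_with_card_n assms by metis
  then show ?thesis using that unfolding card_2_iff by auto
qed

lemma colK: "w \<in> W t \<Longrightarrow> c {0,w} \<in> c ` K2t_edges t" "w \<in> W t \<Longrightarrow> c {1,w} \<in> c ` K2t_edges t"
  using edge0 edge1 by auto

lemma finK: "finite (c ` K2t_edges t)" using edges_finite by simp

lemma L1:
  assumes krc: "k_rainbow_coloring (K2t_vertices t) (K2t_edges t) 3 c" and t: "t \<ge> 1"
  shows "t \<le> card (c ` K2t_edges t) * (card (c ` K2t_edges t) - 1)"
proof -
  let ?K = "c ` K2t_edges t"
  let ?n = "card ?K"
  have n2: "?n \<ge> 2" using N0[OF krc t] .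
  let ?Q = "{X. X \<subseteq> ?K \<and> card X = 2}"
  have cQ: "card ?Q = ?n choose 2" using n_subsets[OF finK] by simp
  have gex: "\<exists>X\<in>?Q. {c {0,w}, c {1,w}} \<subseteq> X" if w: "w \<in> W t" for w
  proof (cases "c {0,w} = c {1,w}")
    case False then show ?thesis using colK[OF w] by (intro bexI[of _ "{c {0,w}, c {1,w}}"]) auto
  next
    case True
    have "card (?K - {c {0,w}}) = ?n - 1" using card_Diff_singleton[OF colK(1)[OF w, of c]] by simp
    then have "card (?K - {c {0,w}}) \<ge> 1" using n2 by linarith
    then obtain y where "y \<in> ?K - {c {0,w}}" by (metis card.empty ex_in_conv not_one_le_zero)
    then show ?thesis using True colK[OF w] by (intro bexI[of _ "{c {0,w}, y}"]) auto
  qed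
  define g where "g w = (SOME X. X \<in> ?Q \<and> {c {0,w}, c {1,w}} \<subseteq> X)" for w
  have g: "g w \<in> ?Q \<and> {c {0,w}, c {1,w}} \<subseteq> g w" if "w \<in> W t" for w
    unfolding g_def using someI_ex[OF gex[OF that, unfolded Bex_def]] by blast
  have "card (W t) \<le> card ?Q * 2"
  proof (rule fiber_bound[of _ _ g])
    show "finite (W t)" by (rule finite_W)
    show "finite ?Q" using finK[of c t] by (rule rev_finite_subset[OF finite_Pow_iff[THEN iffD2]]) auto
    show "g ` W t \<subseteq> ?Q" using g by blast
    fix X assume X: "X \<in> ?Q"
    show "card {x \<in> W t. g x = X} \<le> 2"
    proof (rule ccontr)
      assume "\<not> ?thesis"
      then have "card {x \<in> W t. g x = X} \<ge> 3" by simp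
      then obtain a b d where abd: "a \<in> {x \<in> W t. g x = X}" "b \<in> {x \<in> W t. g x = X}" "d \<in> {x \<in> W t. g x = X}" "distinct [a,b,d]"
        by (rule three_elems)
      obtain x1 x2 x3 where xs: "x1 \<in> {c {0,a}, c {1,a}}" "x2 \<in> {c {0,b}, c {1,b}}" "x3 \<in> {c {0,d}, c {1,d}}" "distinct [x1,x2,x3]"
        using N1[OF krc _ _ _ abd(4)] abd by blast
      have "{x1,x2,x3} \<subseteq> X" using xs g abd by blast
      then have "card {x1,x2,x3} \<le> card X" using X finK by (intro card_mono) (auto intro: finite_subset)
      then show False using xs(4) X by simp
    qed
  qed
  then have "t \<le> (?n choose 2) * 2" using cQ card_W by simp
  also have "\<dots> = ?n * (?n - 1)"
  proof -
    have "even (?n * (?n - 1))" by (cases "even ?n") auto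
    then show ?thesis by (simp add: choose_two)
  qed
  finally show ?thesis .
qed


lemma tcP: "tc a b1 a b2 a b3 \<Longrightarrow> distinct [b1,b2,b3]"
  unfolding tc_def conn_def d4_def by auto

lemma tcQ: "tc x b1 a b1 a b2 \<Longrightarrow> b1 \<noteq> b2 \<Longrightarrow> d4 a b1 b2 x"
  unfolding tc_def conn_def d4_def by auto

lemma tcR: "tc x d y d z d \<Longrightarrow> distinct [x,y,z]"
  unfolding tc_def conn_def d4_def by auto

lemma d4_card: "d4 x y z w \<Longrightarrow> {x,y,z,w} \<subseteq> K \<Longrightarrow> finite K \<Longrightarrow> card K \<ge> 4"
  using card_ge_list[of "[x,y,z,w]" K] unfolding d4_def by simp

lemma conn_card:
  assumes "conn am bm a1 b1 a2 b2" "{am,bm,a1,b1,a2,b2} \<subseteq> K" "finite K"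
  shows "card K \<ge> 4"
  using assms unfolding conn_def
  by (elim disjE) (erule d4_card; use assms in auto)+

lemma card1_eq: "card X = 1 \<Longrightarrow> x \<in> X \<Longrightarrow> y \<in> X \<Longrightarrow> x = y"
  by (metis card_1_singletonE singletonD)

lemma inj_from_triples:
  assumes "card G \<ge> 3" "\<And>g g' g''. g \<in> G \<Longrightarrow> g' \<in> G \<Longrightarrow> g'' \<in> G \<Longrightarrow> distinct [g,g',g''] \<Longrightarrow> f g \<noteq> f g'"
  shows "inj_on f G"
proof (rule inj_onI, rule ccontr)
  fix g g' assume g: "g \<in> G" "g' \<in> G" "f g = f g'" "g \<noteq> g'"
  have fin: "finite G" using assms(1) by (metis card.infinite not_numeral_le_zero)
  have "card (G - {g,g'}) = card G - 2" using g fin by (simp add: card_Diff_subset)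
  then have "card (G - {g,g'}) \<ge> 1" using assms(1) by linarith
  then obtain g'' where "g'' \<in> G - {g,g'}" by (metis card.empty ex_in_conv not_one_le_zero)
  then show False using assms(2)[of g g' g''] g by auto
qed

lemma L2a:
  assumes krc: "k_rainbow_coloring (K2t_vertices t) (K2t_edges t) 3 c" and K3: "card (c ` K2t_edges t) = 3"
  shows "t \<le> 4"
proof (rule ccontr)
  assume "\<not> t \<le> 4"
  then have t5: "t \<ge> 5" by simp
  let ?K = "c ` K2t_edges t"
  define A where "A w = c {0,w}" for w
  define B where "B w = c {1,w}" for w
  have AK: "A w \<in> ?K" "B w \<in> ?K" if "w \<in> W t" for w using colK that unfolding A_def B_def by auto
  have tc3: "(A w1 \<noteq> A w2 \<and> A w1 \<noteq> A w3 \<and> A w2 \<noteq> A w3) \<or> (B w1 \<noteq> B w2 \<and> B w1 \<noteq> B w3 \<and> B w2 \<noteq> B w3)"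
    if w: "w1 \<in> W t" "w2 \<in> W t" "w3 \<in> W t" "distinct [w1,w2,w3]" for w1 w2 w3
  proof -
    have T: "tc (A w1) (B w1) (A w2) (B w2) (A w3) (B w3)"
      unfolding A_def B_def by (rule N2[OF krc w]) (use K3 in simp)
    have sub: "{A w1, B w1, A w2, B w2, A w3, B w3} \<subseteq> ?K" using AK w by auto
    have nc: "\<not> conn x1 y1 x2 y2 x3 y3" if "{x1,y1,x2,y2,x3,y3} \<subseteq> ?K" for x1 y1 x2 y2 x3 y3
      using conn_card[OF _ that finK] K3 by auto
    have n1: "\<not> conn (A w1) (B w1) (A w2) (B w2) (A w3) (B w3)" by (rule nc) (use sub in auto)
    have n2: "\<not> conn (A w2) (B w2) (A w1) (B w1) (A w3) (B w3)" by (rule nc) (use sub in auto)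
    have n3: "\<not> conn (A w3) (B w3) (A w1) (B w1) (A w2) (B w2)" by (rule nc) (use sub in auto)
    show ?thesis using T n1 n2 n3 unfolding tc_def by blast
  qed
  have "\<exists>\<alpha>\<in>?K. card {w \<in> W t. A w = \<alpha>} \<ge> 2"
  proof (rule ccontr)
    assume "\<not> ?thesis"
    then have "card (W t) \<le> card ?K * 1"
      by (intro fiber_bound[of _ _ A]) (use finite_W finK AK in \<open>auto simp: not_le\<close>)
    then show False using K3 card_W t5 by simp
  qed
  then obtain \<alpha> where "card {w \<in> W t. A w = \<alpha>} \<ge> 2" by blast
  then obtain w1 w2 where "w1 \<in> {w \<in> W t. A w = \<alpha>}" "w2 \<in> {w \<in> W t. A w = \<alpha>}" "w1 \<noteq> w2"
    by (rule two_elems)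
  then have w12: "w1 \<in> W t" "w2 \<in> W t" "w1 \<noteq> w2" "A w1 = A w2" by auto
  define G where "G = W t - {w1,w2}"
  have cG: "card G = t - 2" unfolding G_def using w12 finite_W card_W by (simp add: card_Diff_subset)
  have GW: "G \<subseteq> W t" unfolding G_def by auto
  have Bg: "B g \<notin> {B w1, B w2} \<and> B w1 \<noteq> B w2" if "g \<in> G" for g
    using tc3[of w1 w2 g] w12 that unfolding G_def by auto
  have Bconst: "B g = B g'" if "g \<in> G" "g' \<in> G" for g g'
  proof -
    have "card (?K - {B w1, B w2}) = 1"
      using Bg[OF that(1)] AK w12 K3 by (simp add: card_Diff_subset)
    moreover have "B g \<in> ?K - {B w1, B w2}" using Bg[OF that(1)] AK[of g] GW that(1) by auto
    moreover have "B g' \<in> ?K - {B w1, B w2}" using Bg[OF that(2)] AK[of g'] GW that(2) by auto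
    ultimately show ?thesis by (rule card1_eq)
  qed
  have injA: "inj_on A G"
  proof (rule inj_from_triples)
    show "card G \<ge> 3" using cG t5 by simp
    fix g g' g'' assume "g \<in> G" "g' \<in> G" "g'' \<in> G" "distinct [g,g',g'']"
    moreover have "B g = B g'" "B g = B g''" using Bconst \<open>g \<in> G\<close> \<open>g' \<in> G\<close> \<open>g'' \<in> G\<close> by blast+
    ultimately show "A g \<noteq> A g'" using tc3[of g g' g''] GW by auto
  qed
  have "card (A ` G) = card G" using injA by (simp add: card_image)
  moreover have "A ` G \<subseteq> ?K" using AK GW by auto
  moreover have "card (A ` G) \<le> card ?K" using \<open>A ` G \<subseteq> ?K\<close> finK by (rule card_mono[rotated])
  ultimately have "A ` G = ?K" using cG t5 K3 finK[of c t] card_subset_eq[of ?K "A ` G"] by simp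
  then obtain g0 where g0: "g0 \<in> G" "A g0 = A w1" using AK w12 by (metis imageE)
  have "card (G - {g0}) \<ge> 1" using cG t5 g0 by (simp add: card_Diff_singleton)
  then obtain g1 where g1: "g1 \<in> G - {g0}" by (metis card.empty ex_in_conv not_one_le_zero)
  have "distinct [w1,g0,g1]" using g0 g1 unfolding G_def by auto
  moreover have "B g0 = B g1" using Bconst g0 g1 by blast
  ultimately show False using tc3[of w1 g0 g1] g0 g1 w12 GW by auto
qed

lemma L2b:
  assumes krc: "k_rainbow_coloring (K2t_vertices t) (K2t_edges t) 3 c" and K4: "card (c ` K2t_edges t) = 4"
  shows "t \<le> 8"
proof (rule ccontr)
  assume "\<not> t \<le> 8"
  then have t9: "t \<ge> 9" by simp
  let ?K = "c ` K2t_edges t"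
  define A where "A w = c {0,w}" for w
  define B where "B w = c {1,w}" for w
  have AK: "A w \<in> ?K" "B w \<in> ?K" if "w \<in> W t" for w using colK that unfolding A_def B_def by auto
  have T: "tc (A w1) (B w1) (A w2) (B w2) (A w3) (B w3)"
    if w: "w1 \<in> W t" "w2 \<in> W t" "w3 \<in> W t" "distinct [w1,w2,w3]" for w1 w2 w3
    unfolding A_def B_def by (rule N2[OF krc w]) (use K4 in simp)
  have "\<exists>\<alpha>\<in>?K. card {w \<in> W t. A w = \<alpha>} \<ge> 3"
  proof (rule ccontr)
    assume "\<not> ?thesis"
    then have "card (W t) \<le> card ?K * 2"
      by (intro fiber_bound[of _ _ A]) (use finite_W finK AK in \<open>auto simp: not_le\<close>)
    then show False using K4 card_W t9 by simp
  qed
  then obtain \<alpha> where "card {w \<in> W t. A w = \<alpha>} \<ge> 3" by blast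
  then obtain w1 w2 w3 where "w1 \<in> {w \<in> W t. A w = \<alpha>}" "w2 \<in> {w \<in> W t. A w = \<alpha>}" "w3 \<in> {w \<in> W t. A w = \<alpha>}" "distinct [w1,w2,w3]"
    by (rule three_elems)
  then have w123: "w1 \<in> W t" "w2 \<in> W t" "w3 \<in> W t" "distinct [w1,w2,w3]"
      "A w2 = A w1" "A w3 = A w1" by auto
  have Bd: "distinct [B w1, B w2, B w3]" using T[OF w123(1-4)] w123(5,6) by (metis tcP)
  define G where "G = W t - {w1,w2,w3}"
  have cG: "card G = t - 3" unfolding G_def using w123 finite_W card_W by (simp add: card_Diff_subset)
  have GW: "G \<subseteq> W t" unfolding G_def by auto
  have five: False if "distinct [A w1, B wi, B wj, B wk, x]" "wi \<in> W t" "wj \<in> W t" "wk \<in> W t" "x \<in> ?K" for x wi wj wk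
    using card_ge_list[OF that(1), of ?K] that AK w123 K4 finK by auto
  have Bg: "B g \<notin> {B w1, B w2, B w3}" if g: "g \<in> G" for g
  proof
    assume "B g \<in> {B w1, B w2, B w3}"
    have gd: "distinct [g,w1,w2]" "distinct [g,w1,w3]" "distinct [g,w2,w1]" "distinct [g,w2,w3]" "distinct [g,w3,w1]" "distinct [g,w3,w2]"
      "g \<in> W t" using g w123 unfolding G_def by auto
    consider "B g = B w1" | "B g = B w2" | "B g = B w3" using \<open>B g \<in> _\<close> by blast
    then show False
    proof cases
      case 1
      have "d4 (A w1) (B w1) (B w2) (A g)"
      proof -
        have "tc (A g) (B w1) (A w1) (B w1) (A w1) (B w2)" using T[OF gd(7) w123(1) w123(2) gd(1)] 1 w123(5,6) by simp
        then show ?thesis by (rule tcQ) (use Bd in auto)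
      qed
      moreover have "d4 (A w1) (B w1) (B w3) (A g)"
      proof -
        have "tc (A g) (B w1) (A w1) (B w1) (A w1) (B w3)" using T[OF gd(7) w123(1) w123(3) gd(2)] 1 w123(5,6) by simp
        then show ?thesis by (rule tcQ) (use Bd in auto)
      qed
      ultimately show False using five[of w1 w2 w3 "A g"] Bd AK gd(7) w123 unfolding d4_def by auto
    next
      case 2
      have "d4 (A w1) (B w2) (B w1) (A g)"
      proof -
        have "tc (A g) (B w2) (A w1) (B w2) (A w1) (B w1)" using T[OF gd(7) w123(2) w123(1) gd(3)] 2 w123(5,6) by simp
        then show ?thesis by (rule tcQ) (use Bd in auto)
      qed
      moreover have "d4 (A w1) (B w2) (B w3) (A g)"
      proof -
        have "tc (A g) (B w2) (A w1) (B w2) (A w1) (B w3)" using T[OF gd(7) w123(2) w123(3) gd(4)] 2 w123(5,6) by simp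
        then show ?thesis by (rule tcQ) (use Bd in auto)
      qed
      ultimately show False using five[of w2 w1 w3 "A g"] Bd AK gd(7) w123 unfolding d4_def by auto
    next
      case 3
      have "d4 (A w1) (B w3) (B w1) (A g)"
      proof -
        have "tc (A g) (B w3) (A w1) (B w3) (A w1) (B w1)" using T[OF gd(7) w123(3) w123(1) gd(5)] 3 w123(5,6) by simp
        then show ?thesis by (rule tcQ) (use Bd in auto)
      qed
      moreover have "d4 (A w1) (B w3) (B w2) (A g)"
      proof -
        have "tc (A g) (B w3) (A w1) (B w3) (A w1) (B w2)" using T[OF gd(7) w123(3) w123(2) gd(6)] 3 w123(5,6) by simp
        then show ?thesis by (rule tcQ) (use Bd in auto)
      qed
      ultimately show False using five[of w3 w1 w2 "A g"] Bd AK gd(7) w123 unfolding d4_def by auto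
    qed
  qed
  have Bconst: "B g = B g'" if "g \<in> G" "g' \<in> G" for g g'
  proof -
    have "card (?K - {B w1, B w2, B w3}) = 1"
      using Bd AK w123 K4 by (simp add: card_Diff_subset)
    moreover have "B g \<in> ?K - {B w1, B w2, B w3}" using Bg[OF that(1)] AK[of g] GW that(1) by auto
    moreover have "B g' \<in> ?K - {B w1, B w2, B w3}" using Bg[OF that(2)] AK[of g'] GW that(2) by auto
    ultimately show ?thesis by (rule card1_eq)
  qed
  have injA: "inj_on A G"
  proof (rule inj_from_triples)
    show "card G \<ge> 3" using cG t9 by simp
    fix g g' g'' assume g: "g \<in> G" "g' \<in> G" "g'' \<in> G" "distinct [g,g',g'']"
    have "B g' = B g" "B g'' = B g" using Bconst g(1,2,3) by blast+
    then have "tc (A g) (B g) (A g') (B g) (A g'') (B g)" using T[of g g' g''] g GW by auto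
    then show "A g \<noteq> A g'" using tcR by fastforce
  qed
  have "A ` G \<subseteq> ?K" using AK GW by auto
  then have "card G \<le> card ?K" using card_inj_on_le[OF injA _ finK] by blast
  then show False using cG t9 K4 by simp
qed


definition col :: "(nat \<Rightarrow> nat) \<Rightarrow> (nat \<Rightarrow> nat) \<Rightarrow> nat set \<Rightarrow> nat" where
  "col A B e = (if 0 \<in> e then A (Max e) else B (Max e))"

lemma col0: "w \<in> W t \<Longrightarrow> col A B {0,w} = A w"
  unfolding col_def W_def by (simp add: max_def)
lemma col1: "w \<in> W t \<Longrightarrow> col A B {1,w} = B w"
  unfolding col_def W_def by (simp add: max_def)

lemma inj0: "L \<subseteq> W t \<Longrightarrow> inj_on (\<lambda>w. col A B {0,w}) L = inj_on A L"
  by (rule inj_on_cong) (use col0 in blast)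
lemma inj1: "L \<subseteq> W t \<Longrightarrow> inj_on (\<lambda>w. col A B {1,w}) L = inj_on B L"
  by (rule inj_on_cong) (use col1 in blast)

locale good =
  fixes t :: nat and A B :: "nat \<Rightarrow> nat"
  assumes H1: "\<And>w. w \<in> W t \<Longrightarrow> A w \<noteq> B w"
    and H2: "\<And>w w'. w \<in> W t \<Longrightarrow> w' \<in> W t \<Longrightarrow> A w = A w' \<Longrightarrow> B w = B w' \<Longrightarrow> w = w'"
    and H3: "\<And>w1 w2 w3. w1 \<in> W t \<Longrightarrow> w2 \<in> W t \<Longrightarrow> w3 \<in> W t \<Longrightarrow> A w1 = A w2 \<Longrightarrow> B w2 = B w3 \<Longrightarrow> B w1 = A w3
       \<Longrightarrow> \<exists>m\<in>W t. A m \<notin> {A w1, B w2, B w1} \<and> B m \<notin> {A w1, B w2, B w1}"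
begin

abbreviation "c \<equiv> col A B"
abbreviation "GOOD X \<equiv> \<exists>VT ET. subtree (K2t_vertices t) (K2t_edges t) VT ET \<and> X \<subseteq> VT \<and> rainbow c ET"

lemma good_mono: "GOOD X \<Longrightarrow> Y \<subseteq> X \<Longrightarrow> GOOD Y" by blast

lemma star0: "finite L \<Longrightarrow> L \<subseteq> W t \<Longrightarrow> inj_on A L \<Longrightarrow> GOOD (insert 0 L)"
  by (rule ex_star) (auto simp: inj0)

lemma star1: assumes "finite L" "L \<subseteq> W t" "inj_on B L" shows "GOOD (insert 1 L)"
proof -
  have "inj_on (\<lambda>w. c {1,w}) L" using inj1[OF assms(2)] assms(3) by blast
  from ex_star[OF assms(1,2) _ this] show ?thesis by blast
qed

lemma double:
  assumes "finite L0" "finite L1" "L0 \<subseteq> W t" "L1 \<subseteq> W t" "m \<in> W t"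
    "m \<notin> L0" "m \<notin> L1" "L0 \<inter> L1 = {}"
    "inj_on A L0" "inj_on B L1" "A ` L0 \<inter> B ` L1 = {}"
    "A m \<notin> A ` L0 \<union> B ` L1" "B m \<notin> A ` L0 \<union> B ` L1"
  shows "GOOD ({0,1,m} \<union> L0 \<union> L1)"
proof (rule ex_double[OF assms(1-8)])
  have e0: "(\<lambda>w. c {0,w}) ` L0 = A ` L0" using assms(3) col0 by (auto simp: image_def) (metis subsetD)+
  have e1: "(\<lambda>w. c {1,w}) ` L1 = B ` L1" using assms(4) col1 by (auto simp: image_def) (metis subsetD)+
  show "inj_on (\<lambda>w. c {0,w}) L0" using assms(3,9) inj0 by blast
  show "inj_on (\<lambda>w. c {1,w}) L1" using assms(4,10) inj1 by blast
  show "(\<lambda>w. c {0,w}) ` L0 \<inter> (\<lambda>w. c {1,w}) ` L1 = {}" using e0 e1 assms(11) by simp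
  show "c {0,m} \<noteq> c {1,m}" using H1 assms(5) col0 col1 by simp
  show "c {0,m} \<notin> (\<lambda>w. c {0,w}) ` L0 \<union> (\<lambda>w. c {1,w}) ` L1" using e0 e1 assms(5,12) col0 by simp
  show "c {1,m} \<notin> (\<lambda>w. c {0,w}) ` L0 \<union> (\<lambda>w. c {1,w}) ` L1" using e0 e1 assms(5,13) col1 by simp
qed

lemma core:
  assumes W: "p \<in> W t" "q \<in> W t" "r \<in> W t" and d: "distinct [p,q,r]"
    and e: "A p = A q" "B q = B r"
  shows "GOOD {p,q,r}"
proof -
  have h1: "A p \<noteq> B p" "A q \<noteq> B q" "A r \<noteq> B r" using H1 W by auto
  have arq: "A r \<noteq> A q" using H2[of r q] W d e by auto
  have bpq: "B p \<noteq> B q" using H2[of p q] W d e by auto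
  show ?thesis
  proof (cases "B p = A r")
    case False
    have "GOOD ({0,1,q} \<union> {r} \<union> {p})"
      by (rule double) (use W d e h1 arq bpq False in auto)
    then show ?thesis by (rule good_mono) auto
  next
    case True
    obtain m where m: "m \<in> W t" "A m \<notin> {A p, B q, B p}" "B m \<notin> {A p, B q, B p}"
      using H3[OF W e True] by blast
    have "GOOD ({0,1,m} \<union> {p,r} \<union> {q})"
      by (rule double) (use W d e h1 arq bpq True m H1[OF m(1)] in auto)
    then show ?thesis by (rule good_mono) auto
  qed
qed

lemma tripleW:
  assumes W: "x \<in> W t" "y \<in> W t" "z \<in> W t" and d: "distinct [x,y,z]"
  shows "GOOD {x,y,z}"
proof (cases "A x \<noteq> A y \<and> A x \<noteq> A z \<and> A y \<noteq> A z")
  case True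
  have "inj_on A {x,y,z}" using True by (auto simp: inj_on_def)
  then have "GOOD (insert 0 {x,y,z})" by (intro star0) (use W in auto)
  then show ?thesis by (rule good_mono) auto
next
  case nA: False
  show ?thesis
  proof (cases "B x \<noteq> B y \<and> B x \<noteq> B z \<and> B y \<noteq> B z")
    case True
    have "inj_on B {x,y,z}" using True by (auto simp: inj_on_def)
    then have "GOOD (insert 1 {x,y,z})" by (intro star1) (use W in auto)
    then show ?thesis by (rule good_mono) auto
  next
    case nB: False
    have dd: "x \<noteq> y" "x \<noteq> z" "y \<noteq> z" using d by auto
    consider "A x = A y" | "A x = A z" | "A y = A z" using nA by blast
    then show ?thesis
    proof cases
      case a: 1
      consider "B x = B y" | "B x = B z" | "B y = B z" using nB by blast
      then show ?thesis
      proof cases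
        case 1 then show ?thesis using H2[of x y] W a dd by auto
      next
        case 2
        have "GOOD {y,x,z}" by (rule core) (use W d a 2 in auto)
        then show ?thesis by (rule good_mono) auto
      next
        case 3
        have "GOOD {x,y,z}" by (rule core) (use W d a 3 in auto)
        then show ?thesis by (rule good_mono) auto
      qed
    next
      case a: 2
      consider "B x = B y" | "B x = B z" | "B y = B z" using nB by blast
      then show ?thesis
      proof cases
        case 1
        have "GOOD {z,x,y}" by (rule core) (use W d a 1 in auto)
        then show ?thesis by (rule good_mono) auto
      next
        case 2 then show ?thesis using H2[of x z] W a dd by auto
      next
        case 3
        have "GOOD {x,z,y}" by (rule core) (use W d a 3 in auto)
        then show ?thesis by (rule good_mono) auto
      qed
    next
      case a: 3
      consider "B x = B y" | "B x = B z" | "B y = B z" using nB by blast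
      then show ?thesis
      proof cases
        case 1
        have "GOOD {z,y,x}" by (rule core) (use W d a 1 in auto)
        then show ?thesis by (rule good_mono) auto
      next
        case 2
        have "GOOD {y,z,x}" by (rule core) (use W d a 2 in auto)
        then show ?thesis by (rule good_mono) auto
      next
        case 3 then show ?thesis using H2[of y z] W a dd by auto
      qed
    qed
  qed
qed

lemma triple0:
  assumes W: "y \<in> W t" "z \<in> W t" "y \<noteq> z"
  shows "GOOD {0,y,z}"
proof (cases "A y = A z")
  case False
  have "GOOD (insert 0 {y,z})" by (intro star0) (use W False in \<open>auto simp: inj_on_def\<close>)
  then show ?thesis by simp
next
  case True
  have "B y \<noteq> B z" using H2[of y z] W True by auto
  then have "GOOD ({0,1,y} \<union> {} \<union> {z})" by (intro double) (use W True H1 in auto)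
  then show ?thesis by (rule good_mono) auto
qed

lemma triple1:
  assumes W: "y \<in> W t" "z \<in> W t" "y \<noteq> z"
  shows "GOOD {1,y,z}"
proof (cases "B y = B z")
  case False
  have "GOOD (insert 1 {y,z})" by (intro star1) (use W False in \<open>auto simp: inj_on_def\<close>)
  then show ?thesis by simp
next
  case True
  have "A y \<noteq> A z" using H2[of y z] W True by auto
  then have "GOOD ({0,1,y} \<union> {z} \<union> {})" by (intro double) (use W True H1[OF W(1)] H1[OF W(2)] in auto)
  then show ?thesis by (rule good_mono) auto
qed

lemma triple01:
  assumes W: "z \<in> W t"
  shows "GOOD {0,1,z}"
proof -
  have "GOOD ({0,1,z} \<union> {} \<union> {})" by (intro double) (use W H1 in auto)
  then show ?thesis by simp
qed

theorem is_krc: "k_rainbow_coloring (K2t_vertices t) (K2t_edges t) 3 c"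
  unfolding k_rainbow_coloring_def
proof (intro allI impI)
  fix S assume S: "S \<subseteq> K2t_vertices t \<and> card S = 3"
  have inW: "x \<in> W t" if "x \<in> S" "x \<noteq> 0" "x \<noteq> 1" for x
    using S that unfolding K2t_vertices_def W_def by auto
  have fin: "finite S" using S by (metis card.infinite zero_neq_numeral)
  consider "0 \<in> S" "1 \<in> S" | "0 \<in> S" "1 \<notin> S" | "0 \<notin> S" "1 \<in> S" | "0 \<notin> S" "1 \<notin> S" by blast
  then show "GOOD S"
  proof cases
    case 1
    have "card (S - {0,1}) = 1" using S 1 fin by (simp add: card_Diff_subset)
    then obtain z where z: "S - {0,1} = {z}" by (rule card_1_singletonE)
    then have "S = {0,1,z}" "z \<in> W t" using 1 inW[of z] by auto
    then show ?thesis using triple01 by simp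
  next
    case 2
    have "card (S - {0}) = 2" using S 2 fin by (simp add: card_Diff_singleton)
    then obtain y z where yz: "S - {0} = {y,z}" "y \<noteq> z" unfolding card_2_iff by blast
    then have "S = {0,y,z}" "y \<in> W t" "z \<in> W t" using 2 inW[of y] inW[of z] by auto
    then show ?thesis using triple0 yz(2) by simp
  next
    case 3
    have "card (S - {1}) = 2" using S 3 fin by (simp add: card_Diff_singleton)
    then obtain y z where yz: "S - {1} = {y,z}" "y \<noteq> z" unfolding card_2_iff by blast
    then have "S = {1,y,z}" "y \<in> W t" "z \<in> W t" using 3 inW[of y] inW[of z] by auto
    then show ?thesis using triple1 yz(2) by simp
  next
    case 4
    obtain x y z where xyz: "S = {x,y,z}" "x \<noteq> y" "y \<noteq> z" "x \<noteq> z" using S unfolding card_3_iff by blast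
    then have "x \<in> W t" "y \<in> W t" "z \<in> W t" using 4 inW by auto
    then show ?thesis using tripleW xyz by simp
  qed
qed

end


definition tri_set :: "(nat \<times> nat) list \<Rightarrow> bool" where
  "tri_set Q \<longleftrightarrow> (\<forall>a b g. (a,g) \<in> set Q \<longrightarrow> (a,b) \<in> set Q \<longrightarrow> (g,b) \<in> set Q \<longrightarrow>
     (\<exists>p\<in>set Q. fst p \<notin> {a,b,g} \<and> snd p \<notin> {a,b,g}))"

definition tri_list :: "(nat \<times> nat) list \<Rightarrow> bool" where
  "tri_list Q = list_all (\<lambda>p. list_all (\<lambda>q. list_all (\<lambda>r.
     \<not> (fst q = fst p \<and> fst r = snd p \<and> snd r = snd q) \<or>
     list_ex (\<lambda>s. fst s \<notin> {fst p, snd q, snd p} \<and> snd s \<notin> {fst p, snd q, snd p}) Q) Q) Q) Q"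

lemma tri_list_set:
  assumes "tri_list Q" shows "tri_set Q"
  unfolding tri_set_def
proof (intro allI impI)
  fix a b g assume m: "(a,g) \<in> set Q" "(a,b) \<in> set Q" "(g,b) \<in> set Q"
  have H: "\<forall>p\<in>set Q. \<forall>q\<in>set Q. \<forall>r\<in>set Q.
     \<not> (fst q = fst p \<and> fst r = snd p \<and> snd r = snd q) \<or>
     (\<exists>s\<in>set Q. fst s \<notin> {fst p, snd q, snd p} \<and> snd s \<notin> {fst p, snd q, snd p})"
    using assms unfolding tri_list_def list_all_iff list_ex_iff .
  from H[rule_format, OF m(1) m(2) m(3)] show "\<exists>p\<in>set Q. fst p \<notin> {a,b,g} \<and> snd p \<notin> {a,b,g}"
    by (simp add: insert_commute)
qed

lemma ri_eq:
  assumes "k_rainbow_coloring V E 3 c0" "card (c0 ` E) \<le> k"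
    "\<And>c. k_rainbow_coloring V E 3 c \<Longrightarrow> card (c ` E) \<ge> k"
  shows "rainbow_index 3 V E = k"
proof -
  have ex: "\<exists>n c. k_rainbow_coloring V E 3 c \<and> card (c ` E) = n" using assms(1) by blast
  have le: "rainbow_index 3 V E \<le> card (c0 ` E)" unfolding rainbow_index_def
    by (rule Least_le) (use assms(1) in blast)
  obtain c where "k_rainbow_coloring V E 3 c" "card (c ` E) = rainbow_index 3 V E"
    using LeastI_ex[OF ex] unfolding rainbow_index_def by blast
  then have "rainbow_index 3 V E \<ge> k" using assms(3)[OF \<open>k_rainbow_coloring V E 3 c\<close>] by simp
  then show ?thesis using le assms(2) by simp
qed

lemma construct:
  assumes len: "length Q = t" and od: "\<forall>p\<in>set Q. fst p \<noteq> snd p" and dist: "distinct Q"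
    and tri: "tri_set Q" and bnd: "\<forall>p\<in>set Q. fst p < k \<and> snd p < k"
  shows "\<exists>c. k_rainbow_coloring (K2t_vertices t) (K2t_edges t) 3 c \<and> card (c ` K2t_edges t) \<le> k"
proof -
  define A where "A w = fst (Q ! (w - 2))" for w
  define B where "B w = snd (Q ! (w - 2))" for w
  have inQ: "Q ! (w - 2) \<in> set Q" if "w \<in> W t" for w using that len unfolding W_def by auto
  have AB: "(A w, B w) = Q ! (w - 2)" for w unfolding A_def B_def by simp
  interpret good t A B
  proof
    show "A w \<noteq> B w" if "w \<in> W t" for w using od inQ[OF that] unfolding A_def B_def by blast
    show "w = w'" if "w \<in> W t" "w' \<in> W t" "A w = A w'" "B w = B w'" for w w'
    proof -
      have "Q ! (w - 2) = Q ! (w' - 2)" using AB[of w] AB[of w'] that(3,4) by simp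
      moreover have "w - 2 < length Q" "w' - 2 < length Q" using that(1,2) len unfolding W_def by auto
      ultimately have "w - 2 = w' - 2" using dist nth_eq_iff_index_eq by blast
      then show ?thesis using that(1,2) unfolding W_def by auto
    qed
    show "\<exists>m\<in>W t. A m \<notin> {A w1, B w2, B w1} \<and> B m \<notin> {A w1, B w2, B w1}"
      if "w1 \<in> W t" "w2 \<in> W t" "w3 \<in> W t" "A w1 = A w2" "B w2 = B w3" "B w1 = A w3" for w1 w2 w3
    proof -
      have q1: "(A w1, B w1) \<in> set Q" using inQ[OF that(1)] AB[of w1] by simp
      have q2: "(A w2, B w2) \<in> set Q" using inQ[OF that(2)] AB[of w2] by simp
      have q3: "(A w3, B w3) \<in> set Q" using inQ[OF that(3)] AB[of w3] by simp
      have "(A w1, B w1) \<in> set Q" "(A w1, B w2) \<in> set Q" "(B w1, B w2) \<in> set Q"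
        using q1 q2 q3 that(4,5,6) by simp_all
      then obtain p where p: "p \<in> set Q" "fst p \<notin> {A w1, B w2, B w1}" "snd p \<notin> {A w1, B w2, B w1}"
        using tri unfolding tri_set_def by blast
      then obtain i where i: "i < length Q" "Q ! i = p" by (metis in_set_conv_nth)
      have "i + 2 \<in> W t" using i len unfolding W_def by auto
      moreover have "A (i+2) = fst p" "B (i+2) = snd p" unfolding A_def B_def using i by auto
      ultimately show ?thesis by (intro bexI[of _ "i+2"]) (use p in auto)
    qed
  qed
  have "col A B ` K2t_edges t \<subseteq> {..<k}"
  proof
    fix x assume "x \<in> col A B ` K2t_edges t"
    then obtain a b where ab: "x = col A B {a,b}" "a < 2" "2 \<le> b" "b < t + 2"
      unfolding K2t_edges_def by blast
    have bW: "b \<in> W t" using ab unfolding W_def by auto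
    have "a = 0 \<or> a = 1" using ab by auto
    then have "x = A b \<or> x = B b" using ab col0[OF bW] col1[OF bW] by auto
    then show "x \<in> {..<k}" using bnd inQ[OF bW] unfolding A_def B_def by auto
  qed
  then have "card (col A B ` K2t_edges t) \<le> card {..<k}" by (intro card_mono) auto
  then have "card (col A B ` K2t_edges t) \<le> k" by simp
  then show ?thesis by (intro exI[of _ "col A B"] conjI is_krc)
qed

definition blk :: "nat \<Rightarrow> (nat \<times> nat) list" where
  "blk n = map (\<lambda>i. (i,n)) [0..<n] @ map (\<lambda>i. (n,i)) [0..<n]"

fun pl :: "nat \<Rightarrow> (nat \<times> nat) list" where
  "pl 0 = []"
| "pl (Suc n) = pl n @ blk n"

lemma set_blk: "set (blk n) = {p. (snd p = n \<and> fst p < n) \<or> (fst p = n \<and> snd p < n)}"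
  unfolding blk_def by auto

lemma set_pl: "set (pl n) = {p. fst p < n \<and> snd p < n \<and> fst p \<noteq> snd p}"
proof (induction n)
  case 0 then show ?case by simp
next
  case (Suc n)
  show ?case unfolding pl.simps set_append Suc set_blk by auto
qed

lemma distinct_pl: "distinct (pl n)"
proof (induction n)
  case 0 then show ?case by simp
next
  case (Suc n)
  have "distinct (blk n)" unfolding blk_def by (auto simp: distinct_map inj_on_def)
  moreover have "set (pl n) \<inter> set (blk n) = {}" unfolding set_pl set_blk by auto
  ultimately show ?case using Suc by simp
qed

lemma length_pl: "length (pl n) = n * (n - 1)"
proof (induction n)
  case 0 then show ?case by simp
next
  case (Suc n)
  have "length (pl (Suc n)) = n * (n - 1) + 2 * n" using Suc by (simp add: blk_def)
  also have "\<dots> = Suc n * (Suc n - 1)" by (cases n) (simp_all add: algebra_simps)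
  finally show ?case .
qed


definition L3 :: "(nat \<times> nat) list" where "L3 = [(0,1),(1,0),(0,2),(2,0)]"
definition L20 :: "(nat \<times> nat) list" where
  "L20 = [(0, 1), (0, 2), (1, 0), (1, 3), (2, 0), (2, 3), (3, 1), (3, 2), (0, 4), (1, 4), (4, 3), (4, 0), (2, 1), (4, 2), (3, 0), (1, 2), (4, 1), (3, 4), (0, 3), (2, 4)]"

definition okL :: "(nat \<times> nat) list \<Rightarrow> nat \<Rightarrow> nat \<Rightarrow> bool" where
  "okL L k t \<longleftrightarrow> tri_list (take t L) \<and> distinct (take t L) \<and> length (take t L) = t \<and>
     list_all (\<lambda>p. fst p \<noteq> snd p \<and> fst p < k \<and> snd p < k) (take t L)"

lemma okL_construct:
  assumes "okL L k t"
  shows "\<exists>c. k_rainbow_coloring (K2t_vertices t) (K2t_edges t) 3 c \<and> card (c ` K2t_edges t) \<le> k"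
  using assms unfolding okL_def list_all_iff by (intro construct[of "take t L"]) (auto intro: tri_list_set)

lemma ok3a: "list_all (okL L3 2) [1..<3]" unfolding L3_def okL_def tri_list_def by code_simp
lemma ok3b: "list_all (okL L3 3) [3..<5]" unfolding L3_def okL_def tri_list_def by code_simp
lemma ok20a: "list_all (okL L20 4) [5..<9]" unfolding L20_def okL_def tri_list_def by code_simp
lemma ok20b: "list_all (okL L20 5) [9..<21]" unfolding L20_def okL_def tri_list_def by code_simp

lemma upper_small:
  assumes "list_all (okL L k) [lo..<hi]" "lo \<le> t" "t < hi"
  shows "\<exists>c. k_rainbow_coloring (K2t_vertices t) (K2t_edges t) 3 c \<and> card (c ` K2t_edges t) \<le> k"
proof -
  have "okL L k t" using assms unfolding list_all_iff by auto
  then show ?thesis by (rule okL_construct)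
qed

lemma upper_big:
  assumes k: "k \<ge> 6" and t: "(k - 1) * (k - 2) + 1 \<le> t" "t \<le> k * (k - 1)"
  shows "\<exists>c. k_rainbow_coloring (K2t_vertices t) (K2t_edges t) 3 c \<and> card (c ` K2t_edges t) \<le> k"
proof -
  let ?Q = "take t (pl k)"
  have kk: "k = Suc (k - 1)" using k by simp
  have len: "length ?Q = t" using t length_pl[of k] by simp
  have sub: "set ?Q \<subseteq> set (pl k)" by (rule set_take_subset)
  have od: "\<forall>p\<in>set ?Q. fst p \<noteq> snd p" and bnd: "\<forall>p\<in>set ?Q. fst p < k \<and> snd p < k"
    using sub set_pl[of k] by auto
  have dist: "distinct ?Q" using distinct_pl by (rule distinct_take)
  have base: "set (pl (k - 1)) \<subseteq> set ?Q"
  proof -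
    have "pl k = pl (k - 1) @ blk (k - 1)" by (subst kk) simp
    moreover have lp: "length (pl (k - 1)) = (k - 1) * (k - 2)"
      using length_pl[of "k - 1"] by (simp add: numeral_2_eq_2)
    moreover have "length (pl (k - 1)) \<le> t" using lp t by linarith
    ultimately show ?thesis by (simp add: take_append)
  qed
  have tri: "tri_set ?Q" unfolding tri_set_def
  proof (intro allI impI)
    fix a b g :: nat
    have c3: "card {a,b,g} \<le> 3" using card_length[of "[a,b,g]"] by simp
    have "card {0..<k-1} - card {a,b,g} \<le> card ({0..<k-1} - {a,b,g})" by (rule diff_card_le_card_Diff) simp
    then have "card ({0..<k-1} - {a,b,g}) \<ge> 2" using c3 k by simp
    then obtain x y where xy: "x \<in> {0..<k-1} - {a,b,g}" "y \<in> {0..<k-1} - {a,b,g}" "x \<noteq> y" by (rule two_elems)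
    then have "(x,y) \<in> set (pl (k - 1))" using set_pl by auto
    then have "(x,y) \<in> set ?Q" using base by auto
    then show "\<exists>p\<in>set ?Q. fst p \<notin> {a,b,g} \<and> snd p \<notin> {a,b,g}" using xy by (intro bexI[of _ "(x,y)"]) auto
  qed
  show ?thesis by (rule construct[OF len od dist tri bnd])
qed

lemma LB:
  assumes krc: "k_rainbow_coloring (K2t_vertices t) (K2t_edges t) 3 c" and t1: "t \<ge> 1"
  shows "card (c ` K2t_edges t) \<ge> 2"
    and "t \<ge> 3 \<Longrightarrow> card (c ` K2t_edges t) \<ge> 3"
    and "t \<ge> 5 \<Longrightarrow> card (c ` K2t_edges t) \<ge> 4"
    and "t \<ge> 9 \<Longrightarrow> card (c ` K2t_edges t) \<ge> 5"
    and "k \<ge> 6 \<Longrightarrow> (k - 1) * (k - 2) + 1 \<le> t \<Longrightarrow> card (c ` K2t_edges t) \<ge> k"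
proof -
  let ?n = "card (c ` K2t_edges t)"
  have n2: "?n \<ge> 2" by (rule N0[OF krc t1])
  have l1: "t \<le> ?n * (?n - 1)" by (rule L1[OF krc t1])
  have l3: "?n = 3 \<Longrightarrow> t \<le> 4" using L2a[OF krc] by blast
  have l4: "?n = 4 \<Longrightarrow> t \<le> 8" using L2b[OF krc] by blast
  have small: "?n \<le> 4 \<Longrightarrow> t \<le> 8"
  proof -
    assume "?n \<le> 4"
    then consider "?n = 2" | "?n = 3" | "?n = 4" using n2 by linarith
    then show "t \<le> 8" using l1 l3 l4 by cases auto
  qed
  show "?n \<ge> 2" by (rule n2)
  show "t \<ge> 3 \<Longrightarrow> ?n \<ge> 3"
  proof (rule ccontr)
    assume "t \<ge> 3" "\<not> ?n \<ge> 3"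
    then have "?n = 2" using n2 by linarith
    then show False using l1 \<open>t \<ge> 3\<close> by simp
  qed
  show "t \<ge> 5 \<Longrightarrow> ?n \<ge> 4"
  proof (rule ccontr)
    assume "t \<ge> 5" "\<not> ?n \<ge> 4"
    then have "?n = 2 \<or> ?n = 3" using n2 by linarith
    then show False using l1 l3 \<open>t \<ge> 5\<close> by auto
  qed
  show "t \<ge> 9 \<Longrightarrow> ?n \<ge> 5"
    using small by linarith
  assume k: "k \<ge> 6" "(k - 1) * (k - 2) + 1 \<le> t"
  show "?n \<ge> k"
  proof (rule ccontr)
    assume "\<not> ?n \<ge> k"
    then have nk: "?n \<le> k - 1" by simp
    have "5 * 4 \<le> (k - 1) * (k - 2)" using k(1) by (intro mult_le_mono) auto
    then have t21: "t \<ge> 21" using k(2) by simp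
    show False
    proof (cases "?n \<le> 4")
      case True then show False using small t21 by simp
    next
      case False
      have "?n * (?n - 1) \<le> (k - 1) * (k - 2)" using nk by (intro mult_le_mono) auto
      then show False using l1 k(2) by simp
    qed
  qed
qed

theorem theorem1:
  fixes t :: nat
  assumes "t \<ge> 1"
  shows "(t \<le> 2 \<longrightarrow> rainbow_index 3 (K2t_vertices t) (K2t_edges t) = 2)
       \<and> (3 \<le> t \<and> t \<le> 4 \<longrightarrow> rainbow_index 3 (K2t_vertices t) (K2t_edges t) = 3)
       \<and> (5 \<le> t \<and> t \<le> 8 \<longrightarrow> rainbow_index 3 (K2t_vertices t) (K2t_edges t) = 4)
       \<and> (9 \<le> t \<and> t \<le> 20 \<longrightarrow> rainbow_index 3 (K2t_vertices t) (K2t_edges t) = 5)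
       \<and> (\<forall>k::nat. k \<ge> 6 \<and> (k - 1) * (k - 2) + 1 \<le> t \<and> t \<le> k * (k - 1) \<longrightarrow>
            rainbow_index 3 (K2t_vertices t) (K2t_edges t) = k)"
proof (intro conjI impI allI)
  assume "t \<le> 2"
  then obtain c where "k_rainbow_coloring (K2t_vertices t) (K2t_edges t) 3 c" "card (c ` K2t_edges t) \<le> 2"
    using upper_small[OF ok3a] assms by force
  then show "rainbow_index 3 (K2t_vertices t) (K2t_edges t) = 2"
    by (rule ri_eq) (use LB(1) assms in blast)
next
  assume h: "3 \<le> t \<and> t \<le> 4"
  then obtain c where "k_rainbow_coloring (K2t_vertices t) (K2t_edges t) 3 c" "card (c ` K2t_edges t) \<le> 3"
    using upper_small[OF ok3b] by force
  then show "rainbow_index 3 (K2t_vertices t) (K2t_edges t) = 3"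
    by (rule ri_eq) (use LB(2) assms h in blast)
next
  assume h: "5 \<le> t \<and> t \<le> 8"
  then obtain c where "k_rainbow_coloring (K2t_vertices t) (K2t_edges t) 3 c" "card (c ` K2t_edges t) \<le> 4"
    using upper_small[OF ok20a] by force
  then show "rainbow_index 3 (K2t_vertices t) (K2t_edges t) = 4"
    by (rule ri_eq) (use LB(3) assms h in blast)
next
  assume h: "9 \<le> t \<and> t \<le> 20"
  then obtain c where "k_rainbow_coloring (K2t_vertices t) (K2t_edges t) 3 c" "card (c ` K2t_edges t) \<le> 5"
    using upper_small[OF ok20b] by force
  then show "rainbow_index 3 (K2t_vertices t) (K2t_edges t) = 5"
    by (rule ri_eq) (use LB(4) assms h in blast)
next
  fix k :: nat
  assume h: "k \<ge> 6 \<and> (k - 1) * (k - 2) + 1 \<le> t \<and> t \<le> k * (k - 1)"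
  then obtain c where "k_rainbow_coloring (K2t_vertices t) (K2t_edges t) 3 c" "card (c ` K2t_edges t) \<le> k"
    using upper_big by blast
  then show "rainbow_index 3 (K2t_vertices t) (K2t_edges t) = k"
    by (rule ri_eq) (use LB(5) assms h in blast)
qed

end
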